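(* Let $(X,d)$ be a complete non-trivial quasi-metric space ($d(x,y)\ge0$, $d(x,y)=0\iff x=y$, $d(x,y)=d(y,x)$) such that there is a constant $K\in[1,\infty)$ with the quadrilateral inequality $d(x,y)\le K[d(x,z)+d(z,v)+d(v,y)]$ for all $x,y,z,v\in X$. Let $f:X\to X$ satisfy $d(f(x),f(y))\le\alpha\,d(x,y)$ for all $x,y\in X$, with a constant $\alpha\in(0,1)$ such that $\alpha<1/K$. Then $f$ has a unique fixed point $x^*\in X$; for every $x_0\in X$ the iterates $x_{n+1}=f(x_n)$, $n=0,1,2,\dots$, converge to $x^*$, and $$d(x^*,x_n)\le\frac{K\alpha^n}{1-\alpha K}\,d(x_0,x_1)\quad\text{for all } n.$$ *)

theory Defs
  imports Complex_Main
begin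

definition quad_quasi_metric :: "'a set \<Rightarrow> ('a \<Rightarrow> 'a \<Rightarrow> real) \<Rightarrow> real \<Rightarrow> bool" where
  "quad_quasi_metric X d K \<longleftrightarrow>
     (\<forall>x\<in>X. \<forall>y\<in>X. d x y \<ge> 0) \<and>
     (\<forall>x\<in>X. \<forall>y\<in>X. d x y = 0 \<longleftrightarrow> x = y) \<and>
     (\<forall>x\<in>X. \<forall>y\<in>X. d x y = d y x) \<and>
     (\<forall>x\<in>X. \<forall>y\<in>X. \<forall>z\<in>X. \<forall>v\<in>X. d x y \<le> K * (d x z + d z v + d v y))"

definition qm_converges :: "('a \<Rightarrow> 'a \<Rightarrow> real) \<Rightarrow> (nat \<Rightarrow> 'a) \<Rightarrow> 'a \<Rightarrow> bool" where
  "qm_converges d s x \<longleftrightarrow> (\<lambda>n. d (s n) x) \<longlonglongrightarrow> 0"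

definition qm_Cauchy :: "('a \<Rightarrow> 'a \<Rightarrow> real) \<Rightarrow> (nat \<Rightarrow> 'a) \<Rightarrow> bool" where
  "qm_Cauchy d s \<longleftrightarrow> (\<forall>e>0. \<exists>N. \<forall>m\<ge>N. \<forall>n\<ge>N. d (s m) (s n) < e)"

definition qm_complete :: "'a set \<Rightarrow> ('a \<Rightarrow> 'a \<Rightarrow> real) \<Rightarrow> bool" where
  "qm_complete X d \<longleftrightarrow>
     (\<forall>s. (\<forall>n. s n \<in> X) \<longrightarrow> qm_Cauchy d s \<longrightarrow> (\<exists>x\<in>X. qm_converges d s x))"

end

theory Submission
  imports Defs
begin

context
  fixes X :: "'a set" and d :: "'a \<Rightarrow> 'a \<Rightarrow> real" and K \<alpha> :: real and f :: "'a \<Rightarrow> 'a"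
  assumes qm: "quad_quasi_metric X d K"
    and K: "K \<ge> 1"
    and complete: "qm_complete X d"
    and f_into: "\<forall>x\<in>X. f x \<in> X"
    and contr: "\<forall>x\<in>X. \<forall>y\<in>X. d (f x) (f y) \<le> \<alpha> * d x y"
    and \<alpha>: "0 < \<alpha>" "\<alpha> < 1" "\<alpha> < 1 / K"
begin

lemma nn: "x \<in> X \<Longrightarrow> y \<in> X \<Longrightarrow> d x y \<ge> 0"
  using qm unfolding quad_quasi_metric_def by blast
lemma z: "x \<in> X \<Longrightarrow> y \<in> X \<Longrightarrow> d x y = 0 \<longleftrightarrow> x = y"
  using qm unfolding quad_quasi_metric_def by blast
lemma sy: "x \<in> X \<Longrightarrow> y \<in> X \<Longrightarrow> d x y = d y x"
  using qm unfolding quad_quasi_metric_def by blast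
lemma quad: "x \<in> X \<Longrightarrow> y \<in> X \<Longrightarrow> u \<in> X \<Longrightarrow> v \<in> X \<Longrightarrow> d x y \<le> K * (d x u + d u v + d v y)"
  using qm unfolding quad_quasi_metric_def by blast

lemma itX: "x \<in> X \<Longrightarrow> (f ^^ n) x \<in> X"
  by (induction n) (auto simp: f_into)

lemma itc: "x \<in> X \<Longrightarrow> y \<in> X \<Longrightarrow> d ((f ^^ n) x) ((f ^^ n) y) \<le> \<alpha> ^ n * d x y"
proof (induction n)
  case 0 then show ?case by simp
next
  case (Suc n)
  have "d ((f ^^ Suc n) x) ((f ^^ Suc n) y) \<le> \<alpha> * d ((f ^^ n) x) ((f ^^ n) y)"
    using contr itX Suc.prems by simp
  also have "\<dots> \<le> \<alpha> * (\<alpha> ^ n * d x y)"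
    using Suc \<alpha> by (simp add: mult_left_mono)
  finally show ?case by simp
qed

definition "C = K / (1 - \<alpha> * K)"

lemma aK: "\<alpha> * K < 1"
  using \<alpha> K by (simp add: field_simps)

lemma Cge: "C \<ge> K"
proof -
  have "K * (1 - \<alpha> * K) \<le> K" using \<alpha> K by (simp add: algebra_simps)
  then show ?thesis using aK unfolding C_def by (simp add: field_simps)
qed

lemma Ckey: "K * (1 + \<alpha> + \<alpha>\<^sup>2 * C) \<le> C"
proof -
  have p: "1 - \<alpha> * K > 0" using aK by simp
  have "C * (1 - \<alpha> * K) = K" unfolding C_def using p by simp
  have "K * (1 + \<alpha> + \<alpha>\<^sup>2 * C) * (1 - \<alpha> * K) = K * (1 + \<alpha>) * (1 - \<alpha> * K) + K * \<alpha>\<^sup>2 * (C * (1 - \<alpha> * K))"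
    by (simp add: algebra_simps)
  also have "\<dots> = K * ((1 + \<alpha>) * (1 - \<alpha> * K) + \<alpha>\<^sup>2 * K)"
    unfolding \<open>C * (1 - \<alpha> * K) = K\<close> by (simp add: algebra_simps)
  also have "\<dots> \<le> K" using \<alpha> K by (simp add: algebra_simps power2_eq_square mult_left_mono)
  also have "\<dots> = C * (1 - \<alpha> * K)" using \<open>C * (1 - \<alpha> * K) = K\<close> by simp
  finally show ?thesis using p by simp
qed

lemma bound0: "x \<in> X \<Longrightarrow> d x ((f ^^ p) x) \<le> C * d x (f x)"
proof (induction p rule: less_induct)
  case (less p)
  have dn: "d x (f x) \<ge> 0" using nn[of x "f x"] f_into less.prems by simp
  show ?case
  proof (cases "p < 2")
    case True
    then consider "p = 0" | "p = 1" by linarith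
    then show ?thesis
    proof cases
      case 1
      have "d x x = 0" using z[of x x] less.prems by simp
      moreover have "C * d x (f x) \<ge> 0" using dn Cge K by simp
      ultimately show ?thesis using 1 by simp
    next
      case 2
      have "1 * d x (f x) \<le> C * d x (f x)" using dn Cge K by (intro mult_right_mono) auto
      then show ?thesis using 2 by simp
    qed
  next
    case False
    then obtain q where q: "p = 2 + q" "q < p" proof -
      show ?thesis using that[of "p - 2"] False by simp
    qed
    have xX: "x \<in> X" by fact
    have h1: "d (f x) (f (f x)) \<le> \<alpha> * d x (f x)" using contr xX f_into by simp
    have "(f ^^ p) x = (f ^^ 2) ((f ^^ q) x)" using q by (simp add: funpow_add numeral_2_eq_2)
    hence "d ((f ^^ 2) x) ((f ^^ p) x) \<le> \<alpha> ^ 2 * d x ((f ^^ q) x)"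
      using itc[of x "(f ^^ q) x" 2] xX itX by simp
    also have "\<dots> \<le> \<alpha> ^ 2 * (C * d x (f x))"
      using less.IH[OF q(2) xX] by (simp add: mult_left_mono)
    finally have h2: "d (f (f x)) ((f ^^ p) x) \<le> \<alpha> ^ 2 * (C * d x (f x))"
      by (simp add: numeral_2_eq_2)
    have "d x ((f ^^ p) x) \<le> K * (d x (f x) + d (f x) (f (f x)) + d (f (f x)) ((f ^^ p) x))"
      using quad[of x "(f ^^ p) x" "f x" "f (f x)"] xX f_into itX by simp
    also have "\<dots> \<le> K * (d x (f x) + \<alpha> * d x (f x) + \<alpha> ^ 2 * (C * d x (f x)))"
      using h1 h2 K by (intro mult_left_mono) auto
    also have "\<dots> = (K * (1 + \<alpha> + \<alpha>\<^sup>2 * C)) * d x (f x)" by (simp add: algebra_simps)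
    also have "\<dots> \<le> C * d x (f x)" using Ckey dn by (intro mult_right_mono) auto
    finally show ?thesis .
  qed
qed

lemma boundn: "x \<in> X \<Longrightarrow> d ((f ^^ n) x) ((f ^^ (n + p)) x) \<le> \<alpha> ^ n * (C * d x (f x))"
proof -
  assume xX: "x \<in> X"
  have "(f ^^ (n + p)) x = (f ^^ n) ((f ^^ p) x)" by (simp add: funpow_add)
  hence "d ((f ^^ n) x) ((f ^^ (n + p)) x) \<le> \<alpha> ^ n * d x ((f ^^ p) x)"
    using itc[of x "(f ^^ p) x" n] xX itX by simp
  also have "\<dots> \<le> \<alpha> ^ n * (C * d x (f x))" using bound0[OF xX] \<alpha> by (simp add: mult_left_mono)
  finally show ?thesis .
qed

lemma main:
  assumes xX: "x \<in> X"
  shows "\<exists>L\<in>X. f L = L \<and> qm_converges d (\<lambda>n. (f ^^ n) x) L \<and>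
     (\<forall>n. d L ((f ^^ n) x) \<le> K * \<alpha> ^ n / (1 - \<alpha> * K) * d x (f x))"
proof -
  define B where "B = C * d x (f x)"
  have B0: "B \<ge> 0" unfolding B_def using Cge K nn xX f_into by simp
  have lim: "(\<lambda>n. \<alpha> ^ n * B) \<longlonglongrightarrow> 0"
    using LIMSEQ_power_zero[of \<alpha>] \<alpha> by (auto intro: tendsto_mult_left_zero)
  have bd: "d ((f ^^ m) x) ((f ^^ n) x) \<le> \<alpha> ^ min m n * B" for m n
  proof (cases "m \<le> n")
    case True
    then obtain p where "n = m + p" using le_Suc_ex by blast
    then show ?thesis using boundn[OF xX, of m p] True unfolding B_def by simp
  next
    case False
    then obtain p where "m = n + p" using le_Suc_ex[of n m] by auto
    then show ?thesis using boundn[OF xX, of n p] False sy itX xX unfolding B_def by simp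
  qed
  have "qm_Cauchy d (\<lambda>n. (f ^^ n) x)"
    unfolding qm_Cauchy_def
  proof (intro allI impI)
    fix e :: real assume e: "e > 0"
    from lim e obtain N where N: "\<And>n. n \<ge> N \<Longrightarrow> \<bar>\<alpha> ^ n * B\<bar> < e"
      by (metis LIMSEQ_iff diff_zero real_norm_def)
    show "\<exists>N. \<forall>m\<ge>N. \<forall>n\<ge>N. d ((f ^^ m) x) ((f ^^ n) x) < e"
    proof (intro exI allI impI)
      fix m n assume "m \<ge> N" "n \<ge> N"
      hence "min m n \<ge> N" by simp
      then show "d ((f ^^ m) x) ((f ^^ n) x) < e" using N[of "min m n"] bd[of m n] by linarith
    qed
  qed
  then obtain L where LX: "L \<in> X" and conv: "qm_converges d (\<lambda>n. (f ^^ n) x) L"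
  proof -
    assume c: "qm_Cauchy d (\<lambda>n. (f ^^ n) x)"
    have "\<forall>n. (f ^^ n) x \<in> X" using itX[OF xX] by simp
    then have "\<exists>L\<in>X. qm_converges d (\<lambda>n. (f ^^ n) x) L"
      using complete c unfolding qm_complete_def by simp
    then show ?thesis using that by blast
  qed
  have cv: "(\<lambda>n. d ((f ^^ n) x) L) \<longlonglongrightarrow> 0" using conv unfolding qm_converges_def .
  have fL: "f L = L"
  proof -
    have t: "(\<lambda>n. K * (\<alpha> * d ((f ^^ n) x) L + d ((f ^^ Suc n) x) L)) \<longlonglongrightarrow> K * (\<alpha> * 0 + 0)"
      by (intro tendsto_intros cv LIMSEQ_Suc[OF cv])
    have "d (f L) L \<le> K * (\<alpha> * 0 + 0)"
    proof (rule LIMSEQ_le_const[OF t], intro exI allI impI)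
      fix n :: nat
      have "d (f L) L \<le> K * (d (f L) ((f ^^ Suc n) x) + d ((f ^^ Suc n) x) ((f ^^ Suc n) x) + d ((f ^^ Suc n) x) L)"
        using quad[of "f L" L "(f ^^ Suc n) x" "(f ^^ Suc n) x"] LX f_into itX[OF xX] by simp
      also have "\<dots> = K * (d (f L) (f ((f ^^ n) x)) + d ((f ^^ Suc n) x) L)"
        using z[of "(f ^^ Suc n) x" "(f ^^ Suc n) x"] itX[OF xX, of "Suc n"] by simp
      also have "\<dots> \<le> K * (\<alpha> * d L ((f ^^ n) x) + d ((f ^^ Suc n) x) L)"
        using contr LX itX[OF xX] K by (intro mult_left_mono add_right_mono) auto
      also have "\<dots> = K * (\<alpha> * d ((f ^^ n) x) L + d ((f ^^ Suc n) x) L)"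
        using sy LX itX xX by simp
      finally show "d (f L) L \<le> K * (\<alpha> * d ((f ^^ n) x) L + d ((f ^^ Suc n) x) L)" .
    qed
    hence "d (f L) L = 0" using nn LX f_into by (simp add: order_antisym)
    thus ?thesis using z[of "f L" L] LX f_into by simp
  qed
  have est: "d L ((f ^^ n) x) \<le> K * \<alpha> ^ n / (1 - \<alpha> * K) * d x (f x)" for n
  proof -
    define b where "b = K * (\<alpha> ^ Suc n * B + \<alpha> ^ n * d x (f x))"
    have t: "(\<lambda>m. K * d ((f ^^ m) x) L + b) \<longlonglongrightarrow> K * 0 + b"
      by (intro tendsto_intros cv)
    have "d L ((f ^^ n) x) \<le> K * 0 + b"
    proof (rule LIMSEQ_le_const[OF t], intro exI[of _ "Suc n"] allI impI)
      fix m :: nat assume m: "m \<ge> Suc n"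
      have "d L ((f ^^ n) x) \<le> K * (d L ((f ^^ m) x) + d ((f ^^ m) x) ((f ^^ Suc n) x) + d ((f ^^ Suc n) x) ((f ^^ n) x))"
        using quad[of L "(f ^^ n) x" "(f ^^ m) x" "(f ^^ Suc n) x"] LX itX[OF xX, of n] itX[OF xX, of m] itX[OF xX, of "Suc n"] by blast
      also have "\<dots> \<le> K * (d L ((f ^^ m) x) + \<alpha> ^ Suc n * B + \<alpha> ^ n * d x (f x))"
      proof -
        have a1: "d ((f ^^ m) x) ((f ^^ Suc n) x) \<le> \<alpha> ^ Suc n * B" using bd[of m "Suc n"] m min_absorb2[OF m] by simp
        have "d ((f ^^ Suc n) x) ((f ^^ n) x) = d ((f ^^ n) x) ((f ^^ n) (f x))"
          using sy[of "(f ^^ n) (f x)" "(f ^^ n) x"] itX[OF xX] itX[of "f x"] f_into xX by (simp add: funpow_swap1)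
        also have "\<dots> \<le> \<alpha> ^ n * d x (f x)" using itc[of x "f x" n] xX f_into by simp
        finally show ?thesis using a1 K by (intro mult_left_mono) auto
      qed
      also have "\<dots> = K * d ((f ^^ m) x) L + b" unfolding b_def using sy LX itX xX by (simp add: algebra_simps)
      finally show "d L ((f ^^ n) x) \<le> K * d ((f ^^ m) x) L + b" .
    qed
    also have "K * 0 + b = K * \<alpha> ^ n * (\<alpha> * C + 1) * d x (f x)" unfolding b_def B_def by (simp add: algebra_simps)
    also have "\<alpha> * C + 1 = 1 / (1 - \<alpha> * K)" unfolding C_def using aK by (simp add: field_simps)
    finally show ?thesis by simp
  qed
  show ?thesis using LX fL conv est by blast
qed

end

theorem theorem6p2:
  fixes X :: "'a set" and d :: "'a \<Rightarrow> 'a \<Rightarrow> real" and K \<alpha> :: real and f :: "'a \<Rightarrow> 'a"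
  assumes qm: "quad_quasi_metric X d K"
    and K: "K \<ge> 1"
    and complete: "qm_complete X d"
    and nontriv: "\<exists>x\<in>X. \<exists>y\<in>X. x \<noteq> y"
    and f_into: "\<forall>x\<in>X. f x \<in> X"
    and contr: "\<forall>x\<in>X. \<forall>y\<in>X. d (f x) (f y) \<le> \<alpha> * d x y"
    and \<alpha>: "0 < \<alpha>" "\<alpha> < 1" "\<alpha> < 1 / K"
  shows "\<exists>xs\<in>X. f xs = xs \<and> (\<forall>y\<in>X. f y = y \<longrightarrow> y = xs) \<and>
           (\<forall>x0\<in>X. qm_converges d (\<lambda>n. (f ^^ n) x0) xs \<and>
              (\<forall>n. d xs ((f ^^ n) x0) \<le> K * \<alpha> ^ n / (1 - \<alpha> * K) * d x0 (f x0)))"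
proof -
  note M = main[OF qm K complete f_into contr \<alpha>]
  have zz: "x \<in> X \<Longrightarrow> y \<in> X \<Longrightarrow> d x y = 0 \<longleftrightarrow> x = y" for x y
    using qm unfolding quad_quasi_metric_def by blast
  have nz: "x \<in> X \<Longrightarrow> y \<in> X \<Longrightarrow> d x y \<ge> 0" for x y
    using qm unfolding quad_quasi_metric_def by blast
  have uniq: "y = xs" if "y \<in> X" "xs \<in> X" "f y = y" "f xs = xs" for y xs
  proof -
    have "d y xs \<le> \<alpha> * d y xs" using contr that by metis
    hence "d y xs \<le> 0" using \<alpha> by (smt (verit) mult_le_cancel_right1)
    hence "d y xs = 0" using nz that by (simp add: order_antisym)
    thus ?thesis using zz that by blast
  qed
  from nontriv obtain x where xX: "x \<in> X" by blast
  from M[OF xX] obtain L where LX: "L \<in> X" and fL: "f L = L" by blast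
  have R: "qm_converges d (\<lambda>n. (f ^^ n) x0) L \<and> (\<forall>n. d L ((f ^^ n) x0) \<le> K * \<alpha> ^ n / (1 - \<alpha> * K) * d x0 (f x0))"
    if x0: "x0 \<in> X" for x0
  proof -
    from M[OF x0] obtain L' where "L' \<in> X" "f L' = L'" and c:
      "qm_converges d (\<lambda>n. (f ^^ n) x0) L' \<and> (\<forall>n. d L' ((f ^^ n) x0) \<le> K * \<alpha> ^ n / (1 - \<alpha> * K) * d x0 (f x0))"
      by blast
    moreover have "L' = L" using uniq \<open>L' \<in> X\<close> \<open>f L' = L'\<close> LX fL by blast
    ultimately show ?thesis by simp
  qed
  show ?thesis using LX fL uniq R by blast
qed

end
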